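(* Let $\mathcal{R}$ be a set of rules on a finite set $Q$. For every critical rule $(A,q)$ of the antimatroid $\mathcal{A}(\mathcal{R})$, there exists a rule $(A',q)\in\mathcal{R}$ with $A\subseteq A'$.
   Context: A rule on $Q$ is a pair $(A,q)$ with $A\subseteq Q$, $q\in Q$; it accepts $Y\subseteq Q$ if $q\in Y$ implies $Y\cap A\neq\emptyset$. $\mathcal{K}(\mathcal{R})$ is the family of subsets accepted by all rules of $\mathcal{R}$, and $\mathcal{A}(\mathcal{R})$ is the family of $K\in\mathcal{K}(\mathcal{R})$ for which there is a sequence $\emptyset=Y_0\subseteq\dots\subseteq Y_k=K$ of members of $\mathcal{K}(\mathcal{R})$ with $|Y_{i+1}\setminus Y_i|=1$; it is an antimatroid. For an antimatroid $\mathcal{A}$ on $Q$, let $\mathcal{A}^*=\{Q\setminus X: X\in\mathcal{A}\}$ and $\tau(X)=\bigcap\{Y\in\mathcal{A}^*: X\subseteq Y\}$. A rule $(A,q)$ with $q\notin A$ is critical for $\mathcal{A}$ if, with $C=A\cup\{q\}$, $\tau(C)\setminus\{q\}\notin\mathcal{A}^*$ and $\tau(C)\setminus\{q,s\}\in\mathcal{A}^*$ for every $s\in A$. *)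

theory Defs
  imports Main
begin

type_synonym 'a rule = "'a set \<times> 'a"

definition rule_on :: "'a set \<Rightarrow> 'a rule \<Rightarrow> bool" where
  "rule_on Q r \<longleftrightarrow> fst r \<subseteq> Q \<and> snd r \<in> Q"

definition accepts :: "'a rule \<Rightarrow> 'a set \<Rightarrow> bool" where
  "accepts r Y \<longleftrightarrow> (snd r \<in> Y \<longrightarrow> Y \<inter> fst r \<noteq> {})"

definition Kfam :: "'a set \<Rightarrow> 'a rule set \<Rightarrow> 'a set set" where
  "Kfam Q R = {Y. Y \<subseteq> Q \<and> (\<forall>r\<in>R. accepts r Y)}"

definition Afam :: "'a set \<Rightarrow> 'a rule set \<Rightarrow> 'a set set" where
  "Afam Q R = {K \<in> Kfam Q R. \<exists>(Y :: nat \<Rightarrow> 'a set) k. Y 0 = {} \<and> Y k = K \<and>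
      (\<forall>i\<le>k. Y i \<in> Kfam Q R) \<and>
      (\<forall>i<k. Y i \<subseteq> Y (Suc i) \<and> card (Y (Suc i) - Y i) = 1)}"

definition dual_fam :: "'a set \<Rightarrow> 'a set set \<Rightarrow> 'a set set" where
  "dual_fam Q F = (\<lambda>X. Q - X) ` F"

definition tau :: "'a set \<Rightarrow> 'a set set \<Rightarrow> 'a set \<Rightarrow> 'a set" where
  "tau Q F X = \<Inter>{Y \<in> dual_fam Q F. X \<subseteq> Y}"

definition critical :: "'a set \<Rightarrow> 'a set set \<Rightarrow> 'a rule \<Rightarrow> bool" where
  "critical Q F r \<longleftrightarrow> (let A = fst r; q = snd r; C = insert q A in
      q \<notin> A \<and> tau Q F C - {q} \<notin> dual_fam Q F \<and>
      (\<forall>s\<in>A. tau Q F C - {q, s} \<in> dual_fam Q F))"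

end

theory Submission
  imports Defs
begin

inductive reach :: "'a set \<Rightarrow> 'a rule set \<Rightarrow> 'a set \<Rightarrow> bool" for Q R where
  r0: "reach Q R {}"
| rS: "reach Q R Y \<Longrightarrow> x \<notin> Y \<Longrightarrow> insert x Y \<in> Kfam Q R \<Longrightarrow> reach Q R (insert x Y)"

lemma empty_K: "{} \<in> Kfam Q R"
  by (simp add: Kfam_def accepts_def)

lemma reach_K: "reach Q R K \<Longrightarrow> K \<in> Kfam Q R"
  by (induction rule: reach.induct) (auto simp: empty_K)

lemma K_union: "A \<in> Kfam Q R \<Longrightarrow> B \<in> Kfam Q R \<Longrightarrow> A \<union> B \<in> Kfam Q R"
  unfolding Kfam_def accepts_def by blast

lemma Afam_reach: "K \<in> Afam Q R \<Longrightarrow> reach Q R K"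
proof -
  assume "K \<in> Afam Q R"
  then obtain Y k where Y: "Y 0 = {}" "Y k = K" "\<forall>i\<le>k. Y i \<in> Kfam Q R"
    "\<forall>i<k. Y i \<subseteq> Y (Suc i) \<and> card (Y (Suc i) - Y i) = 1"
    unfolding Afam_def by blast
  have "i \<le> k \<Longrightarrow> reach Q R (Y i)" for i
  proof (induction i)
    case 0 then show ?case using Y(1) by (simp add: r0)
  next
    case (Suc i)
    then have "i < k" by simp
    with Y(4) have s: "Y i \<subseteq> Y (Suc i)" "card (Y (Suc i) - Y i) = 1" by auto
    then obtain x where x: "Y (Suc i) - Y i = {x}" by (meson card_1_singletonE)
    then have e: "Y (Suc i) = insert x (Y i)" "x \<notin> Y i" using s by auto
    have "reach Q R (insert x (Y i))"
      using Suc e Y(3) by (intro rS) auto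
    then show ?case using e by simp
  qed
  then show ?thesis using Y(2) by blast
qed

lemma reach_Afam: "reach Q R K \<Longrightarrow> K \<in> Afam Q R"
proof (induction rule: reach.induct)
  case r0
  have "\<exists>(Z :: nat \<Rightarrow> 'a set) m. Z 0 = {} \<and> Z m = {} \<and>
      (\<forall>i\<le>m. Z i \<in> Kfam Q R) \<and>
      (\<forall>i<m. Z i \<subseteq> Z (Suc i) \<and> card (Z (Suc i) - Z i) = 1)"
    by (rule exI[of _ "\<lambda>_. {}"], rule exI[of _ 0]) (simp add: empty_K)
  then show ?case unfolding Afam_def using empty_K by blast
next
  case (rS Y0 x)
  then obtain Y k where Y: "Y 0 = {}" "Y k = Y0" "\<forall>i\<le>k. Y i \<in> Kfam Q R"
    "\<forall>i<k. Y i \<subseteq> Y (Suc i) \<and> card (Y (Suc i) - Y i) = 1"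
    unfolding Afam_def by blast
  define Y' where "Y' i = (if i \<le> k then Y i else insert x Y0)" for i
  have a: "Y' 0 = {}" using Y by (simp add: Y'_def)
  have b: "Y' (Suc k) = insert x Y0" by (simp add: Y'_def)
  have c: "\<forall>i\<le>Suc k. Y' i \<in> Kfam Q R"
  proof (intro allI impI)
    fix i assume "i \<le> Suc k"
    then show "Y' i \<in> Kfam Q R" using Y(3) rS.hyps(3) by (cases "i \<le> k") (simp_all add: Y'_def)
  qed
  have d: "\<forall>i<Suc k. Y' i \<subseteq> Y' (Suc i) \<and> card (Y' (Suc i) - Y' i) = 1"
  proof (intro allI impI)
    fix i assume "i < Suc k"
    then consider "i < k" | "i = k" by linarith
    then show "Y' i \<subseteq> Y' (Suc i) \<and> card (Y' (Suc i) - Y' i) = 1"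
    proof cases
      case 1 then show ?thesis using Y(4) by (simp add: Y'_def)
    next
      case 2
      have "insert x Y0 - Y0 = {x}" using rS.hyps(2) by auto
      then show ?thesis using 2 Y(2) by (simp add: Y'_def subset_insertI)
    qed
  qed
  have "\<exists>(Z :: nat \<Rightarrow> 'a set) m. Z 0 = {} \<and> Z m = insert x Y0 \<and>
      (\<forall>i\<le>m. Z i \<in> Kfam Q R) \<and>
      (\<forall>i<m. Z i \<subseteq> Z (Suc i) \<and> card (Z (Suc i) - Z i) = 1)"
    using a b c d by blast
  then show ?case unfolding Afam_def using rS.hyps(3) by blast
qed

lemma Afam_iff: "K \<in> Afam Q R \<longleftrightarrow> reach Q R K"
  using Afam_reach reach_Afam by blast

lemma reach_union: "reach Q R K2 \<Longrightarrow> reach Q R K1 \<Longrightarrow> reach Q R (K1 \<union> K2)"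
proof (induction rule: reach.induct)
  case r0 then show ?case by simp
next
  case (rS Y x)
  show ?case
  proof (cases "x \<in> K1 \<union> Y")
    case True
    then have "K1 \<union> insert x Y = K1 \<union> Y" by auto
    then show ?thesis using rS by simp
  next
    case False
    have "K1 \<union> insert x Y \<in> Kfam Q R" using K_union[OF reach_K[OF rS(5)] rS(3)] .
    then have "reach Q R (insert x (K1 \<union> Y))" using rS False by (intro reach.rS) auto
    then show ?thesis by simp
  qed
qed

lemma reach_Union: "finite F \<Longrightarrow> \<forall>K\<in>F. reach Q R K \<Longrightarrow> reach Q R (\<Union>F)"
  by (induction rule: finite_induct) (auto simp: r0 reach_union)

lemma Afam_sub: "K \<in> Afam Q R \<Longrightarrow> K \<subseteq> Q"
  unfolding Afam_def Kfam_def by auto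

theorem lemma3p6:
  fixes Q :: "'a set" and R :: "'a rule set" and A :: "'a set" and q :: 'a
  assumes "finite Q"
    and "\<forall>r\<in>R. rule_on Q r"
    and "rule_on Q (A, q)"
    and "critical Q (Afam Q R) (A, q)"
  shows "\<exists>A'. (A', q) \<in> R \<and> A \<subseteq> A'"
proof (rule ccontr)
  assume nex: "\<not> ?thesis"
  define C where "C = insert q A"
  have CQ: "C \<subseteq> Q" "q \<in> Q" using assms(3) by (auto simp: rule_on_def C_def)
  define F where "F = {K \<in> Afam Q R. K \<inter> C = {}}"
  define X where "X = \<Union>F"
  have finF: "finite F" unfolding F_def
    by (rule finite_subset[of _ "Pow Q"]) (auto dest: Afam_sub simp: assms(1))
  have rX: "reach Q R X" unfolding X_def
    by (rule reach_Union[OF finF]) (auto simp: F_def Afam_iff)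
  have XA: "X \<in> Afam Q R" using rX Afam_iff by blast
  have XC: "X \<inter> C = {}" unfolding X_def F_def by auto
  have XQ: "X \<subseteq> Q" using Afam_sub[OF XA] .
  have dual: "Z \<subseteq> Q \<Longrightarrow> (Q - Z \<in> dual_fam Q (Afam Q R)) = (Z \<in> Afam Q R)" for Z
  proof
    assume "Z \<subseteq> Q" "Q - Z \<in> dual_fam Q (Afam Q R)"
    then obtain K where K: "K \<in> Afam Q R" "Q - Z = Q - K" unfolding dual_fam_def by auto
    have "K \<subseteq> Q" using Afam_sub[OF K(1)] .
    then show "Z \<in> Afam Q R" using \<open>Z \<subseteq> Q\<close> K by (metis double_diff order_refl)
  qed (auto simp: dual_fam_def)
  have T: "tau Q (Afam Q R) C = Q - X"
  proof -
    have "Q - X \<in> {Y \<in> dual_fam Q (Afam Q R). C \<subseteq> Y}"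
      using XA XC CQ by (auto simp: dual_fam_def)
    moreover have "Q - X \<subseteq> Y" if Yd: "Y \<in> dual_fam Q (Afam Q R)" "C \<subseteq> Y" for Y
    proof -
      obtain K where K: "K \<in> Afam Q R" "Y = Q - K" using Yd(1) by (auto simp: dual_fam_def)
      then have "K \<in> F" using Yd(2) by (auto simp: F_def)
      then have "K \<subseteq> X" by (auto simp: X_def)
      then show ?thesis using K by auto
    qed
    ultimately show ?thesis unfolding tau_def by blast
  qed
  have crit: "tau Q (Afam Q R) C - {q} \<notin> dual_fam Q (Afam Q R)"
    "\<forall>s\<in>A. tau Q (Afam Q R) C - {q, s} \<in> dual_fam Q (Afam Q R)"
    using assms(4) by (auto simp: critical_def C_def Let_def)
  have AQ: "A \<subseteq> Q" using CQ by (auto simp: C_def)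
  have e1: "tau Q (Afam Q R) C - {q} = Q - insert q X" using T by auto
  have e2: "tau Q (Afam Q R) C - {q, s} = Q - insert q (insert s X)" for s using T by auto
  have n1: "insert q X \<notin> Afam Q R" using crit(1) e1 dual[of "insert q X"] XQ CQ by auto
  have n2: "insert q (insert s X) \<in> Kfam Q R" if "s \<in> A" for s
  proof -
    have "insert q (insert s X) \<in> Afam Q R"
    proof -
      have sQ: "s \<in> Q" using that AQ by auto
      have "Q - insert q (insert s X) \<in> dual_fam Q (Afam Q R)" using crit(2) that e2[of s] by auto
      then show ?thesis using dual[of "insert q (insert s X)"] XQ CQ sQ by auto
    qed
    then show ?thesis unfolding Afam_def by blast
  qed
  have qX: "q \<notin> X" using XC by (auto simp: C_def)
  have "insert q X \<in> Kfam Q R"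
    unfolding Kfam_def
  proof (intro CollectI conjI ballI)
    show "insert q X \<subseteq> Q" using XQ CQ by auto
  next
    fix r assume r: "r \<in> R"
    obtain A' p where rp: "r = (A', p)" by fastforce
    have XK: "X \<in> Kfam Q R" using reach_K[OF rX] .
    show "accepts r (insert q X)"
    proof (cases "p = q")
      case False
      have "accepts r X" using XK r by (auto simp: Kfam_def)
      then show ?thesis using rp False by (auto simp: accepts_def)
    next
      case True
      then obtain s where s: "s \<in> A" "s \<notin> A'" using nex r rp by auto
      have "accepts r (insert q (insert s X))" using n2[OF s(1)] r by (auto simp: Kfam_def)
      then show ?thesis using s rp True by (auto simp: accepts_def)
    qed
  qed
  then have "reach Q R (insert q X)" using rX qX by (intro rS)
  then show False using n1 Afam_iff by blast
qed

end
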